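(* For $1\le j\le n$ let $\varrho_j=\prod_{s=n-j+1}^n\Omega(b_s|y)^{-1}$, regarded as a multiplication operator on $\hat\Lambda$. Then for every $i\in\{0,1,\dots,n-1\}$, $$D_i\circ\varrho_j=\varrho_j\circ\big(\omega^{-j}\circ D_{i+j}\circ\omega^{j}\big),$$ where the subscript $i+j$ is taken modulo $n$ (so $D_n=D_0$).
   Context: Fix $n\ge2$. $R(T)=\mathbb{Z}[e^{\pm a_1},\dots,e^{\pm a_n}]/(e^{a_1+\cdots+a_n}-1)$; subscripts of $a_i,b_i$ mod $n$ in $\{1,\dots,n\}$; $b_i=1-e^{-a_i}$. $\hat\Lambda$: symmetric formal power series in $y=(y_1,y_2,\dots)$ with coefficients in the fraction field of $R(T)$; $\Omega(b_i|y)=\prod_{j\ge1}(1-b_iy_j)^{-1}$. For $1\le i\le n-1$, $s_i$ exchanges $a_i,a_{i+1}$ in coefficients; $s_\theta$ exchanges $a_1,a_n$; $s_0(f)=\frac{\Omega(b_1|y)}{\Omega(b_n|y)}s_\theta(f)$. $\alpha_i=a_i-a_{i+1}$ ($1\le i\le n-1$), $\alpha_0=a_n-a_1$, $D_i=1+(1-e^{\alpha_i})^{-1}(s_i-1)$. $\omega$ is the ring automorphism of $\hat\Lambda$ acting on coefficients by $a_s\mapsto a_{s+1}$ (fixing $y$), so $\omega(\Omega(b_s|y))=\Omega(b_{s+1}|y)$. *)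

theory Defs
  imports "HOL-Library.Poly_Mapping" "HOL-Computational_Algebra.Fraction_Field"
begin

text \<open>Laurent polynomials with integer coefficients in countably many variables X_0, X_1, ...\<close>

type_synonym lexp = "nat \<Rightarrow>\<^sub>0 int"
type_synonym lpoly = "lexp \<Rightarrow>\<^sub>0 int"
type_synonym coeff = "lpoly fract"

text \<open>Model of R(T) = Z[e^{+-a_1},...,e^{+-a_n}]/(e^{a_1+...+a_n}-1): the Laurent
  polynomial ring in X_1,...,X_{n-1}, where e^{a_k} = X_k for 1 <= k < n and
  e^{a_n} = (X_1 ... X_{n-1})^{-1}.  (This is the normal form of the quotient.)
  ev n i is the exponent vector of e^{a_i}, for 1 <= i <= n.\<close>

definition ev :: "nat \<Rightarrow> nat \<Rightarrow> lexp" where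
  "ev n i = (if i < n then Poly_Mapping.single i 1
             else - (\<Sum>k\<in>{1..<n}. Poly_Mapping.single k 1))"

definition RT :: "nat \<Rightarrow> lpoly set" where
  "RT n = {f. \<forall>e\<in>Poly_Mapping.keys f. \<forall>k. k \<notin> {1..<n} \<longrightarrow> Poly_Mapping.lookup e k = 0}"

text \<open>Frac(R(T)), as a subfield of the fraction field of all Laurent polynomials.\<close>
definition KT :: "nat \<Rightarrow> coeff set" where
  "KT n = {Fract a b | a b. a \<in> RT n \<and> b \<in> RT n \<and> b \<noteq> 0}"

definition ea :: "nat \<Rightarrow> nat \<Rightarrow> coeff" where
  "ea n i = Fract (Poly_Mapping.single (ev n i) 1) 1"

definition idx :: "nat \<Rightarrow> int \<Rightarrow> nat" where
  "idx n k = nat ((k - 1) mod int n) + 1"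

definition bb :: "nat \<Rightarrow> nat \<Rightarrow> coeff" where
  "bb n i = 1 - inverse (ea n (idx n (int i)))"

text \<open>The coefficient automorphism induced by a permutation p of {1..n} of the a_s:
  e^{a_k} is sent to e^{a_{p k}}.  It is the substitution of Laurent monomials,
  extended to fractions.\<close>

definition mimg :: "nat \<Rightarrow> (nat \<Rightarrow> nat) \<Rightarrow> lexp \<Rightarrow> lexp" where
  "mimg n p e = frag_extend (\<lambda>k. if 1 \<le> k \<and> k < n then ev n (p k) else Poly_Mapping.single k 1) e"

definition lsub :: "nat \<Rightarrow> (nat \<Rightarrow> nat) \<Rightarrow> lpoly \<Rightarrow> lpoly" where
  "lsub n p f = frag_extend (\<lambda>e. Poly_Mapping.single (mimg n p e) 1) f"

definition csub :: "nat \<Rightarrow> (nat \<Rightarrow> nat) \<Rightarrow> coeff \<Rightarrow> coeff" where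
  "csub n p q = (SOME r. \<exists>a b. b \<noteq> 0 \<and> q = Fract a b \<and> r = Fract (lsub n p a) (lsub n p b))"

definition swp :: "nat \<Rightarrow> nat \<Rightarrow> nat \<Rightarrow> nat" where
  "swp a b s = (if s = a then b else if s = b then a else s)"

text \<open>A formal power series is its coefficient function on monomials (finitely
  supported exponent vectors of the y-variables).\<close>
type_synonym 'k ps = "(nat \<Rightarrow>\<^sub>0 nat) \<Rightarrow> 'k"

definition psone :: "'k::comm_ring_1 ps" where
  "psone m = (if m = 0 then 1 else 0)"

definition psmult :: "'k::comm_ring_1 ps \<Rightarrow> 'k ps \<Rightarrow> 'k ps" where
  "psmult f g m = (\<Sum>q\<in>{q. fst q + snd q = m}. f (fst q) * g (snd q))"

definition permute_mono :: "(nat \<Rightarrow> nat) \<Rightarrow> (nat \<Rightarrow>\<^sub>0 nat) \<Rightarrow> (nat \<Rightarrow>\<^sub>0 nat)" where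
  "permute_mono \<pi> m = Abs_poly_mapping (\<lambda>i. Poly_Mapping.lookup m (\<pi> i))"

definition symmetric_ps :: "'k ps \<Rightarrow> bool" where
  "symmetric_ps f \<longleftrightarrow> (\<forall>\<pi> m. bij \<pi> \<longrightarrow> f (permute_mono \<pi> m) = f m)"

definition Lhat :: "nat \<Rightarrow> coeff ps set" where
  "Lhat n = {f. symmetric_ps f \<and> (\<forall>m. f m \<in> KT n)}"

text \<open>Omega(b|y) = prod_j (1 - b y_j)^{-1} = sum over all monomials m of b^{deg m} y^m.\<close>
definition Omega :: "'k::comm_ring_1 \<Rightarrow> 'k ps" where
  "Omega b m = b ^ (\<Sum>k\<in>Poly_Mapping.keys m. Poly_Mapping.lookup m k)"

text \<open>Omega(b|y)^{-1} = prod_j (1 - b y_j): sum over squarefree monomials of (-b)^{deg m} y^m.\<close>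
definition OmegaInv :: "'k::comm_ring_1 \<Rightarrow> 'k ps" where
  "OmegaInv b m = (if (\<forall>k. Poly_Mapping.lookup m k \<le> 1) then (- b) ^ card (Poly_Mapping.keys m) else 0)"

definition cmap :: "('k \<Rightarrow> 'k) \<Rightarrow> 'k ps \<Rightarrow> 'k ps" where
  "cmap \<sigma> f = (\<lambda>m. \<sigma> (f m))"

text \<open>s_i (1 <= i <= n-1) and s_theta act on coefficients; s_0 f = Omega(b_1)/Omega(b_n) s_theta f.\<close>
definition sop :: "nat \<Rightarrow> nat \<Rightarrow> coeff ps \<Rightarrow> coeff ps" where
  "sop n i f = (if i = 0
     then psmult (psmult (Omega (bb n 1)) (OmegaInv (bb n n))) (cmap (csub n (swp 1 n)) f)
     else cmap (csub n (swp i (i + 1))) f)"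

definition ealpha :: "nat \<Rightarrow> nat \<Rightarrow> coeff" where
  "ealpha n i = (if i = 0 then ea n n / ea n 1 else ea n i / ea n (i + 1))"

definition Dop :: "nat \<Rightarrow> nat \<Rightarrow> coeff ps \<Rightarrow> coeff ps" where
  "Dop n i f = (\<lambda>m. f m + inverse (1 - ealpha n i) * (sop n i f m - f m))"

definition omg :: "nat \<Rightarrow> coeff ps \<Rightarrow> coeff ps" where
  "omg n f = cmap (csub n (\<lambda>s. idx n (int s + 1))) f"

definition omg_inv :: "nat \<Rightarrow> coeff ps \<Rightarrow> coeff ps" where
  "omg_inv n f = cmap (csub n (\<lambda>s. idx n (int s - 1))) f"

definition rho :: "nat \<Rightarrow> nat \<Rightarrow> coeff ps" where
  "rho n j = foldr psmult (map (\<lambda>s. OmegaInv (bb n s)) [n - j + 1..<n + 1]) psone"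

end

theory Submission
  imports Defs
begin

definition P2 :: "(nat \<Rightarrow>\<^sub>0 nat) \<Rightarrow> ((nat \<Rightarrow>\<^sub>0 nat) \<times> (nat \<Rightarrow>\<^sub>0 nat)) set" where
  "P2 m = {q. fst q + snd q = m}"

lemma finite_le_pm: "finite {a :: nat \<Rightarrow>\<^sub>0 nat. \<forall>k. Poly_Mapping.lookup a k \<le> Poly_Mapping.lookup m k}"
proof -
  let ?M = "Max (Poly_Mapping.lookup m ` Poly_Mapping.keys m)"
  let ?S = "{a :: nat \<Rightarrow>\<^sub>0 nat. \<forall>k. Poly_Mapping.lookup a k \<le> Poly_Mapping.lookup m k}"
  let ?F = "{f. \<forall>x. (x \<in> Poly_Mapping.keys m \<longrightarrow> f x \<in> {0..?M}) \<and> (x \<notin> Poly_Mapping.keys m \<longrightarrow> f x = (0::nat))}"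
  have sub: "Poly_Mapping.lookup ` ?S \<subseteq> ?F"
  proof
    fix h assume "h \<in> Poly_Mapping.lookup ` ?S"
    then obtain a where a: "\<forall>k. Poly_Mapping.lookup a k \<le> Poly_Mapping.lookup m k" and h: "h = Poly_Mapping.lookup a" by blast
    show "h \<in> ?F"
    proof (simp only: mem_Collect_eq, intro allI conjI impI)
      fix x assume x: "x \<in> Poly_Mapping.keys m"
      have "Poly_Mapping.lookup m x \<le> ?M" using x by (intro Max_ge) auto
      then show "h x \<in> {0..?M}" using a h by (metis atLeastAtMost_iff le0 le_trans)
    next
      fix x assume "x \<notin> Poly_Mapping.keys m"
      then show "h x = 0" using a h by (metis in_keys_iff le_zero_eq)
    qed
  qed
  have "finite ?F"
    by (rule finite_set_of_finite_funs) auto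
  then have "finite (Poly_Mapping.lookup ` ?S)" using sub by (rule finite_subset[rotated])
  moreover have "inj_on Poly_Mapping.lookup ?S" by (rule inj_onI) simp
  ultimately show ?thesis using finite_imageD by blast
qed

lemma finite_P2: "finite (P2 m)"
proof -
  let ?S = "{a :: nat \<Rightarrow>\<^sub>0 nat. \<forall>k. Poly_Mapping.lookup a k \<le> Poly_Mapping.lookup m k}"
  have "P2 m \<subseteq> ?S \<times> ?S"
  proof
    fix q assume "q \<in> P2 m"
    then have e: "fst q + snd q = m" by (simp add: P2_def)
    have "Poly_Mapping.lookup (fst q) k \<le> Poly_Mapping.lookup m k" for k
      using e[symmetric] by (simp add: lookup_add)
    moreover have "Poly_Mapping.lookup (snd q) k \<le> Poly_Mapping.lookup m k" for k
      using e[symmetric] by (simp add: lookup_add)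
    ultimately show "q \<in> ?S \<times> ?S" by (cases q) auto
  qed
  then show ?thesis by (rule finite_subset) (simp add: finite_le_pm)
qed

lemma psmult_P2: "psmult f g m = (\<Sum>q\<in>P2 m. f (fst q) * g (snd q))"
  by (simp add: psmult_def P2_def)

lemma P2_swap: "q \<in> P2 m \<Longrightarrow> prod.swap q \<in> P2 m"
  by (cases q) (simp add: P2_def add.commute)

lemma psmult_commute: "psmult f g = psmult g f"
proof
  fix m
  show "psmult f g m = psmult g f m"
    unfolding psmult_P2
    by (rule sum.reindex_bij_witness[of _ prod.swap prod.swap]) (simp_all add: P2_swap mult.commute)
qed

lemma psmult_psone: "psmult psone g = g"
proof
  fix m
  have "psmult psone g m = (\<Sum>q\<in>P2 m. if q = (0, m) then g m else 0)"
    unfolding psmult_P2 by (rule sum.cong) (auto simp: psone_def P2_def)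
  also have "\<dots> = g m" using finite_P2[of m] by (subst sum.delta) (simp_all add: P2_def)
  finally show "psmult psone g m = g m" .
qed

lemma psmult_lin: "psmult r (\<lambda>m. f m + c * (h m - f m)) m = psmult r f m + c * (psmult r h m - psmult r f m)"
proof -
  have "psmult r (\<lambda>m. f m + c * (h m - f m)) m = (\<Sum>q\<in>P2 m. r (fst q) * f (snd q) + c * (r (fst q) * h (snd q) - r (fst q) * f (snd q)))"
    unfolding psmult_P2 by (rule sum.cong) (simp_all add: algebra_simps)
  also have "\<dots> = psmult r f m + c * (psmult r h m - psmult r f m)"
    unfolding psmult_P2 sum.distrib sum_distrib_left[symmetric] sum_subtractf[symmetric] ..
  finally show ?thesis .
qed

lemma psmult_assoc: "psmult (psmult f g) h = psmult f (psmult g h)"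
proof
  fix m
  have "psmult (psmult f g) h m = (\<Sum>q\<in>P2 m. \<Sum>r\<in>P2 (fst q). f (fst r) * g (snd r) * h (snd q))"
    unfolding psmult_P2 by (simp add: sum_distrib_right)
  also have "\<dots> = (\<Sum>(q,r)\<in>Sigma (P2 m) (\<lambda>q. P2 (fst q)). f (fst r) * g (snd r) * h (snd q))"
    by (rule sum.Sigma) (simp_all add: finite_P2)
  also have "\<dots> = (\<Sum>(q,r)\<in>Sigma (P2 m) (\<lambda>q. P2 (snd q)). f (fst q) * (g (fst r) * h (snd r)))"
    apply (rule sum.reindex_bij_witness[of _ "\<lambda>x. ((fst (fst x) + fst (snd x), snd (snd x)), (fst (fst x), fst (snd x)))"
                 "\<lambda>y. ((fst (snd y), snd (snd y) + snd (fst y)), (snd (snd y), snd (fst y)))"])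
    subgoal for x by (clarsimp simp: P2_def)
    subgoal for x by (clarsimp simp: P2_def add.assoc)
    subgoal for y by (clarsimp simp: P2_def)
    subgoal for y by (clarsimp simp: P2_def add.assoc)
    subgoal for x by (clarsimp simp: mult.assoc)
    done
  also have "\<dots> = (\<Sum>q\<in>P2 m. \<Sum>r\<in>P2 (snd q). f (fst q) * (g (fst r) * h (snd r)))"
    by (rule sum.Sigma[symmetric]) (simp_all add: finite_P2)
  also have "\<dots> = psmult f (psmult g h) m"
    unfolding psmult_P2 by (simp add: sum_distrib_left)
  finally show "psmult (psmult f g) h m = psmult f (psmult g h) m" .
qed

lemma psmult_left_commute: "psmult f (psmult g h) = psmult g (psmult f h)"
  by (metis psmult_assoc psmult_commute)

definition deg :: "(nat \<Rightarrow>\<^sub>0 nat) \<Rightarrow> nat" where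
  "deg x = (\<Sum>k\<in>Poly_Mapping.keys x. Poly_Mapping.lookup x k)"

lemma deg_superset: "finite K \<Longrightarrow> Poly_Mapping.keys x \<subseteq> K \<Longrightarrow> deg x = (\<Sum>k\<in>K. Poly_Mapping.lookup x k)"
  unfolding deg_def by (rule sum.mono_neutral_left) (auto simp: in_keys_iff)

lemma deg_add: "deg (a + c) = deg a + deg c"
proof -
  let ?K = "Poly_Mapping.keys a \<union> Poly_Mapping.keys c"
  have f: "finite ?K" by simp
  have "deg (a + c) = (\<Sum>k\<in>?K. Poly_Mapping.lookup (a + c) k)"
    by (rule deg_superset[OF f]) (rule keys_add)
  also have "\<dots> = (\<Sum>k\<in>?K. Poly_Mapping.lookup a k) + (\<Sum>k\<in>?K. Poly_Mapping.lookup c k)"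
    by (simp add: lookup_add sum.distrib)
  also have "\<dots> = deg a + deg c"
    by (simp add: deg_superset[OF f])
  finally show ?thesis .
qed

definition sqf :: "(nat \<Rightarrow>\<^sub>0 nat) \<Rightarrow> bool" where
  "sqf c \<longleftrightarrow> (\<forall>k. Poly_Mapping.lookup c k \<le> 1)"

lemma deg_sqf: "sqf c \<Longrightarrow> deg c = card (Poly_Mapping.keys c)"
proof -
  assume s: "sqf c"
  have "deg c = (\<Sum>k\<in>Poly_Mapping.keys c. 1)"
    unfolding deg_def
  proof (rule sum.cong[OF refl])
    fix k assume "k \<in> Poly_Mapping.keys c"
    then have "Poly_Mapping.lookup c k \<noteq> 0" by (simp add: in_keys_iff)
    moreover have "Poly_Mapping.lookup c k \<le> 1" using s by (simp add: sqf_def)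
    ultimately show "Poly_Mapping.lookup c k = 1" by simp
  qed
  then show ?thesis by simp
qed

definition ind :: "nat set \<Rightarrow> (nat \<Rightarrow>\<^sub>0 nat)" where
  "ind T = Abs_poly_mapping (\<lambda>k. if k \<in> T then 1 else 0)"

lemma lookup_ind: "finite T \<Longrightarrow> Poly_Mapping.lookup (ind T) k = (if k \<in> T then 1 else 0)"
proof -
  assume "finite T"
  then have "finite {k. (if k \<in> T then 1 else 0::nat) \<noteq> 0}" by simp
  then show ?thesis unfolding ind_def by (simp add: lookup_Abs_poly_mapping)
qed

lemma keys_ind: "finite T \<Longrightarrow> Poly_Mapping.keys (ind T) = T"
  by (auto simp: in_keys_iff lookup_ind split: if_splits)

lemma sqf_ind: "finite T \<Longrightarrow> sqf (ind T)"
  by (simp add: sqf_def lookup_ind)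

lemma ind_keys: "sqf c \<Longrightarrow> ind (Poly_Mapping.keys c) = c"
proof (rule poly_mapping_eqI)
  fix k assume "sqf c"
  then have "Poly_Mapping.lookup c k \<le> 1" by (simp add: sqf_def)
  then show "Poly_Mapping.lookup (ind (Poly_Mapping.keys c)) k = Poly_Mapping.lookup c k"
    by (auto simp: lookup_ind in_keys_iff)
qed

lemma sum_Pow_sign: "finite K \<Longrightarrow> (\<Sum>T\<in>Pow K. (-1::'a::comm_ring_1) ^ card T) = (if K = {} then 1 else 0)"
proof (induction K rule: finite_induct)
  case empty
  then show ?case by simp
next
  case (insert x K)
  have disj: "Pow K \<inter> insert x ` Pow K = {}" using insert.hyps by auto
  have inj: "inj_on (insert x) (Pow K)" using insert.hyps by (auto simp: inj_on_def)
  have "(\<Sum>T\<in>Pow (insert x K). (-1::'a) ^ card T)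
      = (\<Sum>T\<in>Pow K. (-1::'a) ^ card T) + (\<Sum>T\<in>insert x ` Pow K. (-1::'a) ^ card T)"
    unfolding Pow_insert using insert.hyps disj by (simp add: sum.union_disjoint)
  also have "(\<Sum>T\<in>insert x ` Pow K. (-1::'a) ^ card T) = (\<Sum>T\<in>Pow K. (-1::'a) ^ card (insert x T))"
    using inj by (simp add: sum.reindex)
  also have "\<dots> = (\<Sum>T\<in>Pow K. - ((-1::'a) ^ card T))"
  proof (rule sum.cong[OF refl])
    fix T assume "T \<in> Pow K"
    then have "x \<notin> T" "finite T" using insert.hyps finite_subset by auto
    then show "(-1::'a) ^ card (insert x T) = - ((-1) ^ card T)" by simp
  qed
  finally show ?case by (simp add: sum_negf)
qed

lemma Omega_OmegaInv: "psmult (Omega b) (OmegaInv b) = (psone :: 'k::comm_ring_1 ps)"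
proof
  fix m :: "nat \<Rightarrow>\<^sub>0 nat"
  let ?Q = "{q \<in> P2 m. sqf (snd q)}"
  have fQ: "finite ?Q" using finite_P2[of m] by simp
  have "psmult (Omega b) (OmegaInv b) m = (\<Sum>q\<in>P2 m. Omega b (fst q) * OmegaInv b (snd q))"
    by (rule psmult_P2)
  also have "\<dots> = (\<Sum>q\<in>?Q. Omega b (fst q) * OmegaInv b (snd q))"
  proof (rule sum.mono_neutral_right)
    show "finite (P2 m)" by (rule finite_P2)
    show "?Q \<subseteq> P2 m" by blast
    show "\<forall>q\<in>P2 m - ?Q. Omega b (fst q) * OmegaInv b (snd q) = 0"
    proof
      fix q assume "q \<in> P2 m - ?Q"
      then have "\<not> sqf (snd q)" by blast
      then have "OmegaInv b (snd q) = 0" unfolding OmegaInv_def sqf_def by argo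
      then show "Omega b (fst q) * OmegaInv b (snd q) = 0" by simp
    qed
  qed
  also have "\<dots> = (\<Sum>q\<in>?Q. (-1) ^ card (Poly_Mapping.keys (snd q)) * b ^ deg m)"
  proof (rule sum.cong[OF refl])
    fix q assume q: "q \<in> ?Q"
    then have e: "fst q + snd q = m" and s: "sqf (snd q)" by (auto simp: P2_def)
    have "deg m = deg (fst q) + deg (snd q)" unfolding e[symmetric] by (rule deg_add)
    then have dm: "deg m = deg (fst q) + card (Poly_Mapping.keys (snd q))"
      by (simp only: deg_sqf[OF s])
    have "OmegaInv b (snd q) = (- b) ^ card (Poly_Mapping.keys (snd q))"
      using s by (simp add: OmegaInv_def sqf_def)
    moreover have "Omega b (fst q) = b ^ deg (fst q)" by (simp add: Omega_def deg_def)
    moreover have "(- b) ^ card (Poly_Mapping.keys (snd q)) = (-1) ^ card (Poly_Mapping.keys (snd q)) * b ^ card (Poly_Mapping.keys (snd q))"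
      by (rule power_minus)
    ultimately show "Omega b (fst q) * OmegaInv b (snd q) = (-1) ^ card (Poly_Mapping.keys (snd q)) * b ^ deg m"
      unfolding dm power_add by (simp only: mult_ac)
  qed
  also have "\<dots> = (\<Sum>T\<in>Pow (Poly_Mapping.keys m). (-1) ^ card T * b ^ deg m)"
  proof (rule sum.reindex_bij_witness[of _ "\<lambda>T. (m - ind T, ind T)" "\<lambda>q. Poly_Mapping.keys (snd q)"])
    fix q assume q: "q \<in> ?Q"
    then have e: "fst q + snd q = m" and s: "sqf (snd q)" by (auto simp: P2_def)
    have "m - snd q = fst q" using e add_diff_cancel_right' by metis
    then show "(m - ind (Poly_Mapping.keys (snd q)), ind (Poly_Mapping.keys (snd q))) = q"
      unfolding ind_keys[OF s] by simp
    have "Poly_Mapping.keys (snd q) \<subseteq> Poly_Mapping.keys m"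
    proof
      fix k assume "k \<in> Poly_Mapping.keys (snd q)"
      then have "Poly_Mapping.lookup (snd q) k \<noteq> 0" by (simp add: in_keys_iff)
      moreover have "Poly_Mapping.lookup m k = Poly_Mapping.lookup (fst q) k + Poly_Mapping.lookup (snd q) k"
        using e lookup_add by metis
      ultimately show "k \<in> Poly_Mapping.keys m" by (simp add: in_keys_iff)
    qed
    then show "Poly_Mapping.keys (snd q) \<in> Pow (Poly_Mapping.keys m)" by simp
    show "(-1) ^ card (Poly_Mapping.keys (snd q)) * b ^ deg m = (-1) ^ card (Poly_Mapping.keys (snd q)) * b ^ deg m" ..
  next
    fix T assume T: "T \<in> Pow (Poly_Mapping.keys m)"
    then have fT: "finite T" using finite_subset[of T "Poly_Mapping.keys m"] by simp
    show "Poly_Mapping.keys (snd (m - ind T, ind T)) = T" using fT by (simp add: keys_ind)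
    have "m - ind T + ind T = m"
    proof (rule poly_mapping_eqI)
      fix k
      have "k \<in> T \<Longrightarrow> Poly_Mapping.lookup m k \<noteq> 0" using T by (auto simp: in_keys_iff)
      then show "Poly_Mapping.lookup (m - ind T + ind T) k = Poly_Mapping.lookup m k"
        using fT by (simp add: lookup_add lookup_minus lookup_ind)
    qed
    then show "(m - ind T, ind T) \<in> ?Q" using fT by (simp add: P2_def sqf_ind)
  qed
  also have "\<dots> = (\<Sum>T\<in>Pow (Poly_Mapping.keys m). (-1) ^ card T) * b ^ deg m"
    by (simp add: sum_distrib_right)
  also have "\<dots> = psone m"
  proof (cases "m = 0")
    case True
    then show ?thesis by (simp add: psone_def deg_def)
  next
    case False
    then have "Poly_Mapping.keys m \<noteq> {}" by simp
    then show ?thesis using False by (simp add: sum_Pow_sign psone_def)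
  qed
  finally show "psmult (Omega b) (OmegaInv b) m = psone m" .
qed

definition permn :: "nat \<Rightarrow> (nat \<Rightarrow> nat) \<Rightarrow> bool" where
  "permn n p \<longleftrightarrow> bij_betw p {1..n} {1..n}"

lemma permn_comp: "permn n p \<Longrightarrow> permn n q \<Longrightarrow> permn n (p \<circ> q)"
  unfolding permn_def by (rule bij_betw_trans)

lemma permn_in: "permn n p \<Longrightarrow> s \<in> {1..n} \<Longrightarrow> p s \<in> {1..n}"
  unfolding permn_def using bij_betwE by blast

lemma ev_lt: "s < n \<Longrightarrow> ev n s = frag_of s"
  by (simp add: ev_def)

lemma sum_ev: "1 \<le> n \<Longrightarrow> (\<Sum>s\<in>{1..n}. ev n s) = 0"
proof -
  assume n: "1 \<le> n"
  have "{1..n} = insert n {1..<n}" using n by auto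
  then have "(\<Sum>s\<in>{1..n}. ev n s) = ev n n + (\<Sum>s\<in>{1..<n}. ev n s)" by simp
  also have "(\<Sum>s\<in>{1..<n}. ev n s) = (\<Sum>s\<in>{1..<n}. frag_of s)"
    by (rule sum.cong) (auto simp: ev_lt)
  finally show ?thesis by (simp add: ev_def)
qed

lemma mimg_frag: "mimg n p (frag_of k) = (if 1 \<le> k \<and> k < n then ev n (p k) else frag_of k)"
  by (simp add: mimg_def)

lemma mimg_0 [simp]: "mimg n p 0 = 0"
  by (simp add: mimg_def)

lemma mimg_add: "mimg n p (a + b) = mimg n p a + mimg n p b"
  by (simp add: mimg_def frag_extend_add)

lemma mimg_diff: "mimg n p (a - b) = mimg n p a - mimg n p b"
  by (simp add: mimg_def frag_extend_diff)

lemma mimg_minus: "mimg n p (- a) = - mimg n p a"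
  by (simp add: mimg_def frag_extend_minus)

lemma mimg_sum: "finite I \<Longrightarrow> mimg n p (\<Sum>i\<in>I. g i) = (\<Sum>i\<in>I. mimg n p (g i))"
  by (simp add: mimg_def frag_extend_sum)

lemma mimg_ev: assumes p: "permn n p" and s: "s \<in> {1..n}"
  shows "mimg n p (ev n s) = ev n (p s)"
proof (cases "s < n")
  case True
  then show ?thesis using s by (simp add: ev_lt mimg_frag)
next
  case False
  then have sn: "s = n" using s by simp
  have n: "1 \<le> n" using s by simp
  have "(\<Sum>k\<in>{1..n}. ev n (p k)) = (\<Sum>s\<in>{1..n}. ev n s)"
    using p unfolding permn_def by (rule sum.reindex_bij_betw)
  also have "\<dots> = 0" using n by (rule sum_ev)
  finally have z: "(\<Sum>k\<in>{1..n}. ev n (p k)) = 0" .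
  have "{1..n} = insert n {1..<n}" using n by auto
  then have "ev n (p n) + (\<Sum>k\<in>{1..<n}. ev n (p k)) = 0" using z by simp
  then have e: "ev n (p n) = - (\<Sum>k\<in>{1..<n}. ev n (p k))" by (simp add: eq_neg_iff_add_eq_0)
  have "mimg n p (ev n n) = - (\<Sum>k\<in>{1..<n}. mimg n p (frag_of k))"
    by (simp add: ev_def mimg_minus mimg_sum)
  also have "\<dots> = - (\<Sum>k\<in>{1..<n}. ev n (p k))"
    by (simp add: mimg_frag)
  finally show ?thesis using e sn by simp
qed

lemma mimg_comp: assumes p: "permn n p" and q: "permn n q"
  shows "mimg n p (mimg n q e) = mimg n (p \<circ> q) e"
  using subset_UNIV
proof (induction e rule: frag_induction)
  case zero
  then show ?case by simp
next
  case (one k)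
  show ?case
  proof (cases "1 \<le> k \<and> k < n")
    case True
    then have "q k \<in> {1..n}" using permn_in[OF q] by auto
    then show ?thesis using True by (simp add: mimg_frag mimg_ev[OF p])
  next
    case False
    have "mimg n q (frag_of k) = frag_of k" "mimg n p (frag_of k) = frag_of k"
      "mimg n (p \<circ> q) (frag_of k) = frag_of k"
      using False by (auto simp: mimg_frag)
    then show ?thesis by (simp add: comp_def)
  qed
next
  case (diff a b)
  then show ?case by (simp add: mimg_diff)
qed

lemma mimg_cong: "(\<And>s. s \<in> {1..<n} \<Longrightarrow> p s = q s) \<Longrightarrow> mimg n p = mimg n q"
  unfolding mimg_def by (intro ext frag_extend_eq) (auto intro!: arg_cong[where f = "frag_extend _"] ext)

lemma mimg_id: "(\<And>s. s \<in> {1..<n} \<Longrightarrow> p s = s) \<Longrightarrow> mimg n p e = e"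
proof -
  assume h: "\<And>s. s \<in> {1..<n} \<Longrightarrow> p s = s"
  have "mimg n p e = frag_extend frag_of e"
    unfolding mimg_def by (rule frag_extend_eq) (auto simp: h ev_lt)
  then show ?thesis by (simp flip: frag_expansion)
qed

lemma lsub_alt: "lsub n p f = frag_extend (frag_of \<circ> mimg n p) f"
  by (simp add: lsub_def comp_def)

lemma lsub_frag: "lsub n p (frag_of e) = frag_of (mimg n p e)"
  by (simp add: lsub_def)

lemma lsub_0 [simp]: "lsub n p 0 = 0"
  by (simp add: lsub_def)

lemma lsub_one: "lsub n p 1 = 1"
proof -
  have "lsub n p (Poly_Mapping.single 0 1) = Poly_Mapping.single 0 1" by (simp only: lsub_frag mimg_0)
  then show ?thesis by (simp only: single_one)
qed

lemma lsub_add: "lsub n p (a + b) = lsub n p a + lsub n p b"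
  by (simp add: lsub_def frag_extend_add)

lemma lsub_diff: "lsub n p (a - b) = lsub n p a - lsub n p b"
  by (simp add: lsub_def frag_extend_diff)

lemma lsub_minus: "lsub n p (- a) = - lsub n p a"
  by (simp add: lsub_def frag_extend_minus)

lemma lsub_mult: "lsub n p (a * b) = lsub n p a * lsub n p b"
  using subset_UNIV
proof (induction a rule: frag_induction)
  case zero
  then show ?case by simp
next
  case (one x)
  show ?case
    using subset_UNIV
  proof (induction b rule: frag_induction)
    case zero
    then show ?case by simp
  next
    case (one y)
    have "frag_of x * frag_of y = frag_of (x + y)" by (simp add: mult_single)
    moreover have "frag_of (mimg n p x) * frag_of (mimg n p y) = frag_of (mimg n p (x + y))"
      by (simp add: mult_single mimg_add)
    ultimately show ?case by (simp add: lsub_frag)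
  next
    case (diff a b)
    then show ?case by (simp add: right_diff_distrib lsub_diff)
  qed
next
  case (diff a b)
  then show ?case by (simp add: left_diff_distrib lsub_diff)
qed

lemma lsub_comp: assumes "permn n p" "permn n q"
  shows "lsub n p (lsub n q f) = lsub n (p \<circ> q) f"
proof -
  have "lsub n p (lsub n q f) = frag_extend ((frag_of \<circ> mimg n p) \<circ> mimg n q) f"
    unfolding lsub_alt comp_assoc[symmetric] by (rule frag_extend_compose)
  also have "(frag_of \<circ> mimg n p) \<circ> mimg n q = frag_of \<circ> mimg n (p \<circ> q)"
    by (rule ext) (simp add: mimg_comp[OF assms])
  finally show ?thesis by (simp add: lsub_alt comp_def)
qed

lemma lsub_id: "(\<And>s. s \<in> {1..<n} \<Longrightarrow> p s = s) \<Longrightarrow> lsub n p f = f"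
proof -
  assume h: "\<And>s. s \<in> {1..<n} \<Longrightarrow> p s = s"
  have m: "mimg n p e = e" for e by (rule mimg_id) (rule h)
  have "frag_of \<circ> mimg n p = frag_of" by (rule ext) (simp only: comp_apply m)
  then show ?thesis by (simp add: lsub_alt flip: frag_expansion)
qed

lemma permn_inv: assumes "permn n p"
  obtains p' where "permn n p'" "\<And>s. s \<in> {1..n} \<Longrightarrow> p' (p s) = s"
proof
  show "permn n (inv_into {1..n} p)" using assms unfolding permn_def by (rule bij_betw_inv_into)
  show "\<And>s. s \<in> {1..n} \<Longrightarrow> inv_into {1..n} p (p s) = s"
    using assms unfolding permn_def by (simp add: bij_betw_inv_into_left)
qed

lemma lsub_inj: assumes "permn n p" "lsub n p a = lsub n p b" shows "a = b"
proof -
  obtain p' where p': "permn n p'" "\<And>s. s \<in> {1..n} \<Longrightarrow> p' (p s) = s"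
    using permn_inv[OF assms(1)] by blast
  have id: "\<And>x. lsub n (p' \<circ> p) x = x" by (rule lsub_id) (simp add: p')
  have "lsub n p' (lsub n p a) = lsub n p' (lsub n p b)" using assms(2) by simp
  then show ?thesis by (simp add: lsub_comp[OF p'(1) assms(1)] id)
qed

lemma lsub_nz: "permn n p \<Longrightarrow> b \<noteq> 0 \<Longrightarrow> lsub n p b \<noteq> 0"
  using lsub_inj[of n p b 0] by auto

lemma csub_Fract: assumes p: "permn n p" and b: "b \<noteq> 0"
  shows "csub n p (Fract a b) = Fract (lsub n p a) (lsub n p b)"
  unfolding csub_def
proof (rule someI2_ex)
  show "\<exists>r a' b'. b' \<noteq> 0 \<and> Fract a b = Fract a' b' \<and> r = Fract (lsub n p a') (lsub n p b')"
    using b by (intro exI[of _ "Fract (lsub n p a) (lsub n p b)"] exI[of _ a] exI[of _ b]) simp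
next
  fix r assume "\<exists>a' b'. b' \<noteq> 0 \<and> Fract a b = Fract a' b' \<and> r = Fract (lsub n p a') (lsub n p b')"
  then obtain a' b' where h: "b' \<noteq> 0" "Fract a b = Fract a' b'" "r = Fract (lsub n p a') (lsub n p b')"
    by blast
  have "a * b' = a' * b" using h(1,2) b by (simp add: eq_fract)
  then have "lsub n p (a * b') = lsub n p (a' * b)" by simp
  then have "lsub n p a * lsub n p b' = lsub n p a' * lsub n p b" by (simp only: lsub_mult)
  moreover have "lsub n p b \<noteq> 0" "lsub n p b' \<noteq> 0" using lsub_nz[OF p] b h(1) by auto
  ultimately show "r = Fract (lsub n p a) (lsub n p b)" using h(3) by (simp add: eq_fract)
qed

lemma csub_add: assumes p: "permn n p" shows "csub n p (x + y) = csub n p x + csub n p y"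
proof -
  obtain a b where x: "x = Fract a b" "b \<noteq> 0" by (cases x)
  obtain c d where y: "y = Fract c d" "d \<noteq> 0" by (cases y)
  have nz: "lsub n p b \<noteq> 0" "lsub n p d \<noteq> 0" using lsub_nz[OF p] x(2) y(2) by auto
  have bd: "b * d \<noteq> 0" using x(2) y(2) by simp
  have "x + y = Fract (a * d + c * b) (b * d)" using x y by (simp only: add_fract[OF x(2) y(2)])
  then have "csub n p (x + y) = Fract (lsub n p (a * d + c * b)) (lsub n p (b * d))"
    by (simp only: csub_Fract[OF p bd])
  also have "\<dots> = Fract (lsub n p a * lsub n p d + lsub n p c * lsub n p b) (lsub n p b * lsub n p d)"
    by (simp only: lsub_add lsub_mult)
  also have "\<dots> = Fract (lsub n p a) (lsub n p b) + Fract (lsub n p c) (lsub n p d)"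
    by (rule add_fract[symmetric]) (rule nz)+
  also have "\<dots> = csub n p x + csub n p y"
    using x y by (simp only: csub_Fract[OF p x(2)] csub_Fract[OF p y(2)])
  finally show ?thesis .
qed

lemma csub_mult: assumes p: "permn n p" shows "csub n p (x * y) = csub n p x * csub n p y"
proof -
  obtain a b where x: "x = Fract a b" "b \<noteq> 0" by (cases x)
  obtain c d where y: "y = Fract c d" "d \<noteq> 0" by (cases y)
  have bd: "b * d \<noteq> 0" using x(2) y(2) by simp
  have "x * y = Fract (a * c) (b * d)" using x y by (simp only: mult_fract)
  then have "csub n p (x * y) = Fract (lsub n p (a * c)) (lsub n p (b * d))"
    by (simp only: csub_Fract[OF p bd])
  also have "\<dots> = Fract (lsub n p a) (lsub n p b) * Fract (lsub n p c) (lsub n p d)"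
    by (simp only: lsub_mult mult_fract)
  also have "\<dots> = csub n p x * csub n p y"
    using x y by (simp only: csub_Fract[OF p x(2)] csub_Fract[OF p y(2)])
  finally show ?thesis .
qed

lemma csub_minus: assumes p: "permn n p" shows "csub n p (- x) = - csub n p x"
proof -
  obtain a b where x: "x = Fract a b" "b \<noteq> 0" by (cases x)
  have "- x = Fract (- a) b" using x by (simp only: minus_fract)
  then have "csub n p (- x) = Fract (lsub n p (- a)) (lsub n p b)"
    by (simp only: csub_Fract[OF p x(2)])
  also have "\<dots> = - csub n p x"
    using x by (simp only: csub_Fract[OF p x(2)] lsub_minus minus_fract)
  finally show ?thesis .
qed

lemma csub_one: assumes p: "permn n p" shows "csub n p 1 = 1"
proof -
  have "csub n p (Fract 1 1) = Fract 1 1" by (simp only: csub_Fract[OF p one_neq_zero] lsub_one)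
  then show ?thesis by (simp only: One_fract_def[symmetric])
qed

lemma csub_zero: assumes p: "permn n p" shows "csub n p 0 = 0"
proof -
  have "csub n p (Fract 0 1) = Fract 0 1" by (simp only: csub_Fract[OF p one_neq_zero] lsub_one lsub_0)
  then show ?thesis by (simp only: Zero_fract_def[symmetric])
qed

lemma csub_inverse: assumes p: "permn n p" shows "csub n p (inverse x) = inverse (csub n p x)"
proof -
  obtain a b where x: "x = Fract a b" "b \<noteq> 0" by (cases x)
  show ?thesis
  proof (cases "a = 0")
    case True
    have "x = Fract 0 1" using x True by (simp add: eq_fract)
    then have "x = 0" by (simp only: Zero_fract_def[symmetric])
    then show ?thesis by (simp add: csub_zero[OF p])
  next
    case False
    have "inverse x = Fract b a" using x by (simp only: inverse_fract)
    then have "csub n p (inverse x) = Fract (lsub n p b) (lsub n p a)"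
      by (simp only: csub_Fract[OF p False])
    also have "\<dots> = inverse (csub n p x)"
      using x by (simp only: csub_Fract[OF p x(2)] inverse_fract)
    finally show ?thesis .
  qed
qed

lemma csub_diff: "permn n p \<Longrightarrow> csub n p (x - y) = csub n p x - csub n p y"
  by (simp only: diff_conv_add_uminus csub_add csub_minus)

lemma csub_divide: "permn n p \<Longrightarrow> csub n p (x / y) = csub n p x / csub n p y"
  by (simp only: divide_inverse csub_mult csub_inverse)

lemma csub_comp: assumes p: "permn n p" and q: "permn n q"
  shows "csub n p (csub n q x) = csub n (p \<circ> q) x"
proof -
  obtain a b where x: "x = Fract a b" "b \<noteq> 0" by (cases x)
  have nz: "lsub n q b \<noteq> 0" using lsub_nz[OF q] x(2) by auto
  have "csub n p (csub n q x) = csub n p (Fract (lsub n q a) (lsub n q b))"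
    using x by (simp only: csub_Fract[OF q x(2)])
  also have "\<dots> = Fract (lsub n p (lsub n q a)) (lsub n p (lsub n q b))"
    by (rule csub_Fract[OF p nz])
  also have "\<dots> = csub n (p \<circ> q) x"
    using x by (simp only: csub_Fract[OF permn_comp[OF p q] x(2)] lsub_comp[OF p q])
  finally show ?thesis .
qed

lemma csub_cong: "(\<And>s. s \<in> {1..<n} \<Longrightarrow> p s = q s) \<Longrightarrow> csub n p = csub n q"
proof -
  assume h: "\<And>s. s \<in> {1..<n} \<Longrightarrow> p s = q s"
  have m: "mimg n p = mimg n q" by (rule mimg_cong) (rule h)
  have "lsub n p = lsub n q" by (rule ext) (simp only: lsub_def m)
  then show ?thesis unfolding csub_def by simp
qed

lemma permn_id: "permn n id"
  by (simp add: permn_def)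

lemma csub_id: "(\<And>s. s \<in> {1..<n} \<Longrightarrow> p s = s) \<Longrightarrow> csub n p x = x"
proof -
  assume h: "\<And>s. s \<in> {1..<n} \<Longrightarrow> p s = s"
  have e: "csub n p = csub n id" by (rule csub_cong) (simp add: h)
  obtain a b where x: "x = Fract a b" "b \<noteq> 0" by (cases x)
  have "lsub n id f = f" for f by (rule lsub_id) simp
  then show ?thesis using x by (simp only: e csub_Fract[OF permn_id x(2)])
qed

lemma csub_ea: assumes p: "permn n p" and s: "s \<in> {1..n}"
  shows "csub n p (ea n s) = ea n (p s)"
  by (simp only: ea_def csub_Fract[OF p one_neq_zero] lsub_one lsub_frag mimg_ev[OF p s])

definition chom :: "('k::comm_ring_1 \<Rightarrow> 'k) \<Rightarrow> bool" where
  "chom \<sigma> \<longleftrightarrow> (\<forall>x y. \<sigma> (x + y) = \<sigma> x + \<sigma> y) \<and> (\<forall>x y. \<sigma> (x * y) = \<sigma> x * \<sigma> y)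
     \<and> \<sigma> 1 = 1 \<and> \<sigma> 0 = 0 \<and> (\<forall>x. \<sigma> (- x) = - \<sigma> x)"

lemma chom_csub: "permn n p \<Longrightarrow> chom (csub n p)"
  unfolding chom_def by (simp add: csub_add csub_mult csub_one csub_zero csub_minus)

lemma chom_sum: assumes "chom \<sigma>" shows "\<sigma> (sum g A) = (\<Sum>x\<in>A. \<sigma> (g x))"
proof (cases "finite A")
  case True
  then show ?thesis
    by (induction A rule: finite_induct) (use assms in \<open>simp_all add: chom_def\<close>)
next
  case False
  then show ?thesis using assms by (simp add: chom_def)
qed

lemma chom_pow: assumes "chom \<sigma>" shows "\<sigma> (x ^ k) = \<sigma> x ^ k"
  by (induction k) (use assms in \<open>simp_all add: chom_def\<close>)

lemma cmap_psmult: assumes "chom \<sigma>" shows "cmap \<sigma> (psmult f g) = psmult (cmap \<sigma> f) (cmap \<sigma> g)"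
proof
  fix m
  show "cmap \<sigma> (psmult f g) m = psmult (cmap \<sigma> f) (cmap \<sigma> g) m"
    unfolding cmap_def psmult_def chom_sum[OF assms] using assms by (simp add: chom_def)
qed

lemma cmap_Omega: assumes "chom \<sigma>" shows "cmap \<sigma> (Omega b) = Omega (\<sigma> b)"
  by (rule ext) (simp add: cmap_def Omega_def chom_pow[OF assms])

lemma cmap_OmegaInv: assumes "chom \<sigma>" shows "cmap \<sigma> (OmegaInv b) = OmegaInv (\<sigma> b)"
  using assms by (intro ext) (simp add: cmap_def OmegaInv_def chom_pow[OF assms] chom_def)

lemma cmap_psone: assumes "chom \<sigma>" shows "cmap \<sigma> psone = psone"
  using assms by (intro ext) (simp add: cmap_def psone_def chom_def)

lemma cmap_cmap: "cmap \<sigma> (cmap \<tau> f) = cmap (\<sigma> \<circ> \<tau>) f"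
  by (simp add: cmap_def)

interpretation PS: comm_monoid "psmult :: coeff ps \<Rightarrow> coeff ps \<Rightarrow> coeff ps" psone
proof
  fix a b c :: "coeff ps"
  show "psmult (psmult a b) c = psmult a (psmult b c)" by (rule psmult_assoc)
  show "psmult a b = psmult b a" by (rule psmult_commute)
  show "psmult a psone = a" by (simp add: psmult_commute[of a] psmult_psone)
qed

interpretation PSS: comm_monoid_set "psmult :: coeff ps \<Rightarrow> coeff ps \<Rightarrow> coeff ps" psone
  ..

lemma foldr_PSS: "distinct xs \<Longrightarrow> foldr psmult (map g xs) psone = PSS.F g (set xs)"
  by (induction xs) (simp_all add: PSS.insert)

lemma cmap_PSS: assumes "chom \<sigma>" and "finite A"
  shows "cmap \<sigma> (PSS.F g A) = PSS.F (\<lambda>x. cmap \<sigma> (g x)) A"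
  using assms(2) by (induction A rule: finite_induct) (simp_all add: cmap_psone[OF assms(1)] cmap_psmult[OF assms(1)])

definition lo :: "nat \<Rightarrow> nat \<Rightarrow> nat" where "lo n x = (if x = 0 then n else x)"
definition Ush :: "nat \<Rightarrow> nat \<Rightarrow> nat \<Rightarrow> nat" where "Ush n j s = idx n (int s + int j)"
definition Dsh :: "nat \<Rightarrow> nat \<Rightarrow> nat \<Rightarrow> nat" where "Dsh n j s = idx n (int s - int j)"

lemma idx_range: "0 < n \<Longrightarrow> idx n k \<in> {1..n}"
proof -
  assume n: "0 < n"
  have "0 \<le> (k - 1) mod int n" "(k - 1) mod int n < int n" using n by simp_all
  then show ?thesis unfolding idx_def by auto
qed

lemma idx_self: "s \<in> {1..n} \<Longrightarrow> idx n (int s) = s"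
proof -
  assume s: "s \<in> {1..n}"
  then have "(int s - 1) mod int n = int s - 1" by (intro mod_pos_pos_trivial) auto
  then show ?thesis using s unfolding idx_def by auto
qed

lemma idx_mod: "k mod int n = k' mod int n \<Longrightarrow> idx n k = idx n k'"
proof -
  assume h: "k mod int n = k' mod int n"
  have "(k - 1) mod int n = (k mod int n - 1) mod int n" by (simp add: mod_diff_left_eq)
  also have "\<dots> = (k' mod int n - 1) mod int n" using h by simp
  also have "\<dots> = (k' - 1) mod int n" by (simp add: mod_diff_left_eq)
  finally show ?thesis unfolding idx_def by simp
qed

lemma idx_cong: "0 < n \<Longrightarrow> int (idx n k) mod int n = k mod int n"
proof -
  assume n: "0 < n"
  have "int (idx n k) = (k - 1) mod int n + 1" unfolding idx_def using n by simp
  then have "int (idx n k) mod int n = ((k - 1) mod int n + 1) mod int n" by simp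
  also have "\<dots> = (k - 1 + 1) mod int n" by (simp add: mod_add_left_eq)
  finally show ?thesis by simp
qed

lemma idx_shift: "0 < n \<Longrightarrow> idx n (int (idx n k) + c) = idx n (k + c)"
proof (rule idx_mod)
  assume n: "0 < n"
  have "(int (idx n k) + c) mod int n = (int (idx n k) mod int n + c) mod int n" by (simp add: mod_add_left_eq)
  also have "\<dots> = (k mod int n + c) mod int n" using idx_cong[OF n] by simp
  also have "\<dots> = (k + c) mod int n" by (simp add: mod_add_left_eq)
  finally show "(int (idx n k) + c) mod int n = (k + c) mod int n" .
qed

lemma idx_shift_minus: "0 < n \<Longrightarrow> idx n (int (idx n k) - c) = idx n (k - c)"
  using idx_shift[of n k "- c"] by simp

lemma lo_idx: "x < n \<Longrightarrow> lo n x = idx n (int x)"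
proof (cases "x = 0")
  case True
  assume n: "x < n"
  then have "0 < n" by simp
  then have "(- 1) mod int n = int n - 1" by (simp add: zmod_minus1)
  then show ?thesis using True n unfolding lo_def idx_def by simp
next
  case False
  assume n: "x < n"
  then have "(int x - 1) mod int n = int x - 1" using False by (intro mod_pos_pos_trivial) auto
  then show ?thesis using False unfolding lo_def idx_def by simp
qed

lemma hi_idx: "x < n \<Longrightarrow> x + 1 = idx n (int x + 1)"
proof -
  assume n: "x < n"
  then have "int x mod int n = int x" by (intro mod_pos_pos_trivial) auto
  then show ?thesis unfolding idx_def by simp
qed

lemma Dsh_Ush: "0 < n \<Longrightarrow> s \<in> {1..n} \<Longrightarrow> Dsh n j (Ush n j s) = s"
  unfolding Dsh_def Ush_def
  by (simp add: idx_shift[where c = "- int j", simplified] idx_self)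

lemma Ush_Dsh: "0 < n \<Longrightarrow> s \<in> {1..n} \<Longrightarrow> Ush n j (Dsh n j s) = s"
  unfolding Dsh_def Ush_def
  by (simp add: idx_shift idx_self)

lemma Ush_range: "0 < n \<Longrightarrow> Ush n j s \<in> {1..n}"
  unfolding Ush_def by (rule idx_range)

lemma Dsh_range: "0 < n \<Longrightarrow> Dsh n j s \<in> {1..n}"
  unfolding Dsh_def by (rule idx_range)

lemma permn_Ush: assumes n: "0 < n" shows "permn n (Ush n j)"
  unfolding permn_def
proof (rule bij_betw_byWitness[where f' = "Dsh n j"])
  show "\<forall>a\<in>{1..n}. Dsh n j (Ush n j a) = a" using Dsh_Ush[OF n] by blast
  show "\<forall>a\<in>{1..n}. Ush n j (Dsh n j a) = a" using Ush_Dsh[OF n] by blast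
  show "Ush n j ` {1..n} \<subseteq> {1..n}" using Ush_range[OF n] by blast
  show "Dsh n j ` {1..n} \<subseteq> {1..n}" using Dsh_range[OF n] by blast
qed

lemma permn_Dsh: assumes n: "0 < n" shows "permn n (Dsh n j)"
  unfolding permn_def
proof (rule bij_betw_byWitness[where f' = "Ush n j"])
  show "\<forall>a\<in>{1..n}. Dsh n j (Ush n j a) = a" using Dsh_Ush[OF n] by blast
  show "\<forall>a\<in>{1..n}. Ush n j (Dsh n j a) = a" using Ush_Dsh[OF n] by blast
  show "Ush n j ` {1..n} \<subseteq> {1..n}" using Ush_range[OF n] by blast
  show "Dsh n j ` {1..n} \<subseteq> {1..n}" using Dsh_range[OF n] by blast
qed

lemma omg_pow: assumes n: "0 < n" shows "(omg n ^^ j) f = cmap (csub n (Ush n j)) f"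
proof (induction j)
  case 0
  have "cmap (csub n (Ush n 0)) f = f"
    unfolding cmap_def by (subst csub_id) (auto simp: Ush_def idx_self)
  then show ?case by simp
next
  case (Suc j)
  have "(omg n ^^ Suc j) f = omg n ((omg n ^^ j) f)" by simp
  also have "\<dots> = omg n (cmap (csub n (Ush n j)) f)" by (simp only: Suc.IH)
  also have "\<dots> = cmap (csub n (Ush n 1)) (cmap (csub n (Ush n j)) f)"
  proof -
    have "Ush n 1 = (\<lambda>s. idx n (int s + 1))" by (rule ext) (simp add: Ush_def)
    then show ?thesis by (simp only: omg_def)
  qed
  also have "\<dots> = cmap (csub n (Ush n 1 \<circ> Ush n j)) f"
    unfolding cmap_cmap by (simp add: comp_def csub_comp[OF permn_Ush[OF n] permn_Ush[OF n]])
  also have "csub n (Ush n 1 \<circ> Ush n j) = csub n (Ush n (Suc j))"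
    by (rule csub_cong) (simp add: Ush_def idx_shift[OF n, of _ 1] add.assoc add.commute[of "int j" 1])
  finally show ?case .
qed

lemma omg_inv_pow: assumes n: "0 < n" shows "(omg_inv n ^^ j) f = cmap (csub n (Dsh n j)) f"
proof (induction j)
  case 0
  have "cmap (csub n (Dsh n 0)) f = f"
    unfolding cmap_def by (subst csub_id) (auto simp: Dsh_def idx_self)
  then show ?case by simp
next
  case (Suc j)
  have "(omg_inv n ^^ Suc j) f = omg_inv n ((omg_inv n ^^ j) f)" by simp
  also have "\<dots> = omg_inv n (cmap (csub n (Dsh n j)) f)" by (simp only: Suc.IH)
  also have "\<dots> = cmap (csub n (Dsh n 1)) (cmap (csub n (Dsh n j)) f)"
  proof -
    have "Dsh n 1 = (\<lambda>s. idx n (int s - 1))" by (rule ext) (simp add: Dsh_def)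
    then show ?thesis by (simp only: omg_inv_def)
  qed
  also have "\<dots> = cmap (csub n (Dsh n 1 \<circ> Dsh n j)) f"
    unfolding cmap_cmap by (simp add: comp_def csub_comp[OF permn_Dsh[OF n] permn_Dsh[OF n]])
  also have "csub n (Dsh n 1 \<circ> Dsh n j) = csub n (Dsh n (Suc j))"
    by (rule csub_cong) (simp add: Dsh_def idx_shift_minus[OF n] algebra_simps)
  finally show ?case .
qed

lemma swp_sym: "swp a b = swp b a"
  by (rule ext) (simp add: swp_def)

lemma swp_invol: "swp a b (swp a b s) = s"
  by (simp add: swp_def)

lemma inj_swp: "inj_on (swp a b) A"
  by (rule inj_onI) (metis swp_invol)

lemma permn_swp: assumes "a \<in> {1..n}" "b \<in> {1..n}" shows "permn n (swp a b)"
  unfolding permn_def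
proof (rule bij_betw_byWitness[where f' = "swp a b"])
  show "\<forall>x\<in>{1..n}. swp a b (swp a b x) = x" by (simp add: swp_invol)
  show "\<forall>x\<in>{1..n}. swp a b (swp a b x) = x" by (simp add: swp_invol)
  show "swp a b ` {1..n} \<subseteq> {1..n}" using assms by (auto simp: swp_def)
  show "swp a b ` {1..n} \<subseteq> {1..n}" using assms by (auto simp: swp_def)
qed

lemma swp_image_same: "(a \<in> S \<longleftrightarrow> b \<in> S) \<Longrightarrow> swp a b ` S = S"
  by (auto simp: swp_def image_iff)

lemma swp_image_move: "a \<notin> S \<Longrightarrow> b \<in> S \<Longrightarrow> swp a b ` S = insert a (S - {b})"
  by (auto simp: swp_def image_iff)

lemma lo_range: "0 < n \<Longrightarrow> x < n \<Longrightarrow> lo n x \<in> {1..n}"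
  by (auto simp: lo_def)

lemma lo_ne_hi: "2 \<le> n \<Longrightarrow> x < n \<Longrightarrow> lo n x \<noteq> x + 1"
  by (auto simp: lo_def)

lemma csub_bb: assumes p: "permn n p" and s: "s \<in> {1..n}"
  shows "csub n p (bb n s) = bb n (p s)"
proof -
  have ps: "p s \<in> {1..n}" using permn_in[OF p s] .
  have "csub n p (bb n s) = 1 - inverse (csub n p (ea n s))"
    unfolding bb_def idx_self[OF s] by (simp only: csub_diff[OF p] csub_one[OF p] csub_inverse[OF p])
  also have "\<dots> = bb n (p s)" unfolding bb_def idx_self[OF ps] csub_ea[OF p s] ..
  finally show ?thesis .
qed

lemma ealpha_alt: "ealpha n x = ea n (lo n x) / ea n (x + 1)"
  by (simp add: ealpha_def lo_def)

lemma csub_ealpha: assumes p: "permn n p" and "2 \<le> n" "x < n"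
  shows "csub n p (ealpha n x) = ea n (p (lo n x)) / ea n (p (x + 1))"
proof -
  have "lo n x \<in> {1..n}" "x + 1 \<in> {1..n}" using assms lo_range by auto
  then show ?thesis unfolding ealpha_alt by (simp only: csub_divide[OF p] csub_ea[OF p])
qed

definition sig :: "nat \<Rightarrow> nat \<Rightarrow> nat \<Rightarrow> nat" where
  "sig n x = swp (lo n x) (x + 1)"

definition WW :: "nat \<Rightarrow> nat \<Rightarrow> coeff ps" where
  "WW n x = psmult (Omega (bb n (x + 1))) (OmegaInv (bb n (lo n x)))"

lemma sop_alt: "x < n \<Longrightarrow> sop n x h = (if x = 0 then psmult (WW n 0) (cmap (csub n (sig n x)) h) else cmap (csub n (sig n x)) h)"
  by (simp add: sop_def WW_def sig_def lo_def swp_sym)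

lemma permn_sig: "2 \<le> n \<Longrightarrow> x < n \<Longrightarrow> permn n (sig n x)"
  unfolding sig_def by (rule permn_swp) (auto simp: lo_def)

locale setup6 =
  fixes n j i :: nat
  assumes n2: "2 \<le> n" and j1: "1 \<le> j" and jn: "j \<le> n" and il: "i < n"
begin

abbreviation "k \<equiv> (i + j) mod n"
abbreviation "U \<equiv> Ush n j"
abbreviation "D \<equiv> Dsh n j"

lemma n0: "0 < n" using n2 by simp
lemma kl: "k < n" using n0 by simp

lemma k0_iff: "k = 0 \<longleftrightarrow> i + j = n"
proof (cases "i + j < n")
  case True
  then show ?thesis using j1 by simp
next
  case False
  then have "k = i + j - n" using il jn by (simp add: le_mod_geq)
  then show ?thesis using False by simp
qed

lemma U_lo: "U (lo n i) = lo n k"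
proof -
  have "U (lo n i) = idx n (int (idx n (int i)) + int j)" unfolding Ush_def lo_idx[OF il] ..
  also have "\<dots> = idx n (int i + int j)" by (rule idx_shift[OF n0])
  also have "\<dots> = idx n (int k)" by (rule idx_mod) (simp add: zmod_int)
  also have "\<dots> = lo n k" using lo_idx[OF kl] by simp
  finally show ?thesis .
qed

lemma U_hi: "U (i + 1) = k + 1"
proof -
  have "U (i + 1) = idx n (int i + int j + 1)" unfolding Ush_def by (simp add: ac_simps)
  also have "\<dots> = idx n (int k + 1)" by (rule idx_mod) (simp add: zmod_int mod_add_left_eq)
  also have "\<dots> = k + 1" using hi_idx[OF kl] by simp
  finally show ?thesis .
qed

lemma lo_i: "lo n i \<in> {1..n}" using lo_range[OF n0 il] .
lemma hi_i: "i + 1 \<in> {1..n}" using il by simp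
lemma lo_k: "lo n k \<in> {1..n}" using lo_range[OF n0 kl] .
lemma hi_k: "k + 1 \<in> {1..n}" using kl by simp

lemma D_lo: "D (lo n k) = lo n i" using Dsh_Ush[OF n0 lo_i, of j] U_lo by simp
lemma D_hi: "D (k + 1) = i + 1" using Dsh_Ush[OF n0 hi_i, of j] U_hi by simp

lemma K1: "s \<in> {1..n} \<Longrightarrow> D (sig n k (U s)) = sig n i s"
proof -
  assume s: "s \<in> {1..n}"
  have Us: "U s \<in> {1..n}" using Ush_range[OF n0] by blast
  have DU: "D (U s) = s" using Dsh_Ush[OF n0 s] .
  have nek: "lo n k \<noteq> k + 1" using lo_ne_hi[OF n2 kl] .
  have nei: "lo n i \<noteq> i + 1" using lo_ne_hi[OF n2 il] .
  show ?thesis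
  proof (cases "s = lo n i")
    case True
    then show ?thesis using U_lo D_hi by (simp add: sig_def swp_def)
  next
    case F1: False
    show ?thesis
    proof (cases "s = i + 1")
      case True
      then show ?thesis using U_hi D_lo nek nei by (simp add: sig_def swp_def)
    next
      case False
      have "U s \<noteq> lo n k" using F1 DU D_lo by metis
      moreover have "U s \<noteq> k + 1" using False DU D_hi by metis
      ultimately show ?thesis using F1 False DU by (simp add: sig_def swp_def)
    qed
  qed
qed

lemma permn_U: "permn n U" using permn_Ush[OF n0] .
lemma permn_D: "permn n D" using permn_Dsh[OF n0] .
lemma permn_sk: "permn n (sig n k)" using permn_sig[OF n2 kl] .
lemma permn_si: "permn n (sig n i)" using permn_sig[OF n2 il] .

lemma csub_conj: "csub n D (csub n (sig n k) (csub n U x)) = csub n (sig n i) x"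
proof -
  have "csub n D (csub n (sig n k) (csub n U x)) = csub n (D \<circ> (sig n k \<circ> U)) x"
    by (simp only: csub_comp[OF permn_sk permn_U] csub_comp[OF permn_D permn_comp[OF permn_sk permn_U]])
  also have "csub n (D \<circ> (sig n k \<circ> U)) = csub n (sig n i)"
    by (rule csub_cong) (simp add: K1)
  finally show ?thesis .
qed

lemma csub_DU: "csub n D (csub n U x) = x"
proof -
  have "csub n D (csub n U x) = csub n (D \<circ> U) x" by (rule csub_comp[OF permn_D permn_U])
  also have "\<dots> = x" by (rule csub_id) (simp add: Dsh_Ush[OF n0])
  finally show ?thesis .
qed

lemma ealpha_k: "csub n D (ealpha n k) = ealpha n i"
proof -
  have "csub n D (ealpha n k) = ea n (D (lo n k)) / ea n (D (k + 1))" by (rule csub_ealpha[OF permn_D n2 kl])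
  then show ?thesis unfolding D_lo D_hi ealpha_alt .
qed

definition TT :: "coeff ps \<Rightarrow> coeff ps" where
  "TT f = (if k = 0 then psmult (WW n i) (cmap (csub n (sig n i)) f) else cmap (csub n (sig n i)) f)"

lemma W_k: "k = 0 \<Longrightarrow> cmap (csub n D) (WW n 0) = WW n i"
proof -
  assume k0: "k = 0"
  have h: "chom (csub n D)" by (rule chom_csub[OF permn_D])
  have "cmap (csub n D) (WW n 0) = psmult (Omega (csub n D (bb n (k + 1)))) (OmegaInv (csub n D (bb n (lo n k))))"
    unfolding WW_def cmap_psmult[OF h] cmap_Omega[OF h] cmap_OmegaInv[OF h] k0 ..
  also have "\<dots> = WW n i"
    unfolding csub_bb[OF permn_D hi_k] csub_bb[OF permn_D lo_k] D_lo D_hi WW_def ..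
  finally show ?thesis .
qed

lemma sop_k: "cmap (csub n D) (sop n k (cmap (csub n U) f)) = TT f"
proof (cases "k = 0")
  case True
  have h: "chom (csub n D)" by (rule chom_csub[OF permn_D])
  have "cmap (csub n D) (sop n k (cmap (csub n U) f))
      = psmult (cmap (csub n D) (WW n 0)) (cmap (csub n D) (cmap (csub n (sig n k)) (cmap (csub n U) f)))"
    unfolding sop_alt[OF kl] if_P[OF True] by (simp only: cmap_psmult[OF h])
  also have "\<dots> = TT f"
    unfolding W_k[OF True] TT_def if_P[OF True] by (simp only: cmap_def csub_conj)
  finally show ?thesis .
next
  case False
  then show ?thesis unfolding sop_alt[OF kl] TT_def by (simp add: cmap_def csub_conj)
qed

lemma rhs_inner: "cmap (csub n D) (Dop n k (cmap (csub n U) f))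
   = (\<lambda>m. f m + inverse (1 - ealpha n i) * (TT f m - f m))"
proof
  fix m
  have s: "TT f m = csub n D (sop n k (cmap (csub n U) f) m)"
    using sop_k[of f] by (metis cmap_def)
  show "cmap (csub n D) (Dop n k (cmap (csub n U) f)) m = f m + inverse (1 - ealpha n i) * (TT f m - f m)"
    unfolding s cmap_def Dop_def
    by (simp only: csub_add[OF permn_D] csub_mult[OF permn_D] csub_diff[OF permn_D] csub_inverse[OF permn_D]
        csub_one[OF permn_D] csub_DU ealpha_k)
qed

end

context setup6
begin

abbreviation "S \<equiv> {n - j + 1..<n + 1}"
abbreviation "GG \<equiv> (\<lambda>s. OmegaInv (bb n s))"

lemma rho_F: "rho n j = PSS.F GG S"
  unfolding rho_def foldr_PSS[OF distinct_upt] set_upt ..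

lemma S_sub: "S \<subseteq> {1..n}" by auto

lemma cmap_rho: assumes p: "permn n p" and inj: "inj_on p S"
  shows "cmap (csub n p) (rho n j) = PSS.F GG (p ` S)"
proof -
  have h: "chom (csub n p)" by (rule chom_csub[OF p])
  have "cmap (csub n p) (rho n j) = PSS.F (\<lambda>s. cmap (csub n p) (GG s)) S"
    unfolding rho_F by (rule cmap_PSS[OF h]) simp
  also have "\<dots> = PSS.F (GG \<circ> p) S"
  proof (rule PSS.cong[OF refl])
    fix s assume "s \<in> S"
    then have s: "s \<in> {1..n}" using S_sub by blast
    show "cmap (csub n p) (GG s) = (GG \<circ> p) s"
      by (simp only: cmap_OmegaInv[OF h] csub_bb[OF p s] comp_apply)
  qed
  also have "\<dots> = PSS.F GG (p ` S)" by (rule PSS.reindex[OF inj, symmetric])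
  finally show ?thesis .
qed

lemma Om_cancel: "psmult (psmult (Omega b) (OmegaInv b)) Y = (Y :: coeff ps)"
  by (simp only: Omega_OmegaInv psmult_psone)

lemma sop_rho: "sop n i (psmult (rho n j) f) = psmult (rho n j) (TT f)"
proof -
  let ?s = "sig n i"
  let ?X = "cmap (csub n ?s) f"
  have h: "chom (csub n ?s)" by (rule chom_csub[OF permn_si])
  have inj: "inj_on ?s S" unfolding sig_def by (rule inj_swp)
  have base: "cmap (csub n ?s) (psmult (rho n j) f) = psmult (PSS.F GG (?s ` S)) ?X"
    by (simp only: cmap_psmult[OF h] cmap_rho[OF permn_si inj])
  have fS: "finite S" by simp
  show ?thesis
  proof (cases "i = 0")
    case False
    then have loi: "lo n i = i" by (simp add: lo_def)
    have sopi: "sop n i g = cmap (csub n ?s) g" for g using sop_alt[OF il] False by simp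
    show ?thesis
    proof (cases "k = 0")
      case False
      then have "i + j \<noteq> n" using k0_iff by simp
      then have "(i \<in> S \<longleftrightarrow> i + 1 \<in> S)" using il jn by auto
      then have e: "?s ` S = S" unfolding sig_def loi by (rule swp_image_same)
      have t: "TT f = ?X" unfolding TT_def using False by simp
      show ?thesis unfolding sopi base e t by (simp only: rho_F)
    next
      case True
      then have ij: "i + j = n" using k0_iff by simp
      have iS: "i \<notin> S" "i + 1 \<in> S" using ij il by auto
      let ?P = "PSS.F GG (S - {i + 1})"
      have "?s ` S = insert i (S - {i + 1})" unfolding sig_def loi by (rule swp_image_move[OF iS])
      then have e1: "PSS.F GG (?s ` S) = psmult (GG i) ?P" using fS iS by (simp add: PSS.insert)
      have e2: "rho n j = psmult (GG (i + 1)) ?P" unfolding rho_F by (rule PSS.remove[OF fS iS(2)])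
      have e3: "TT f = psmult (psmult (Omega (bb n (i + 1))) (GG i)) ?X"
        unfolding TT_def WW_def loi using True by simp
      have "psmult (rho n j) (TT f) = psmult (psmult (Omega (bb n (i + 1))) (GG (i + 1))) (psmult (psmult (GG i) ?P) ?X)"
        unfolding e2 e3 by (simp only: psmult_assoc psmult_commute psmult_left_commute)
      also have "\<dots> = psmult (psmult (GG i) ?P) ?X" by (rule Om_cancel)
      finally show ?thesis unfolding sopi base e1 by simp
    qed
  next
    case True
    then have i0: "i = 0" .
    have sop0: "sop n i g = psmult (WW n 0) (cmap (csub n ?s) g)" for g using sop_alt[OF il] i0 by simp
    have sw: "?s = swp 1 n" unfolding sig_def lo_def i0 by (simp add: swp_sym)
    show ?thesis
    proof (cases "k = 0")
      case True
      then have jn': "j = n" using k0_iff i0 by simp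
      have "(1 \<in> S \<longleftrightarrow> n \<in> S)" using jn' n2 by auto
      then have e: "?s ` S = S" unfolding sw by (rule swp_image_same)
      have t: "TT f = psmult (WW n 0) ?X" unfolding TT_def using True i0 by simp
      show ?thesis unfolding sop0 base e t by (simp only: rho_F psmult_left_commute)
    next
      case False
      then have "j \<noteq> n" using k0_iff i0 by simp
      then have iS: "1 \<notin> S" "n \<in> S" using jn n2 j1 by auto
      let ?P = "PSS.F GG (S - {n})"
      have "?s ` S = insert 1 (S - {n})" unfolding sw by (rule swp_image_move[OF iS])
      then have e1: "PSS.F GG (?s ` S) = psmult (GG 1) ?P" using fS iS by (simp add: PSS.insert)
      have e2: "rho n j = psmult (GG n) ?P" unfolding rho_F by (rule PSS.remove[OF fS iS(2)])
      have e3: "TT f = ?X" unfolding TT_def using False by simp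
      have e4: "WW n 0 = psmult (Omega (bb n 1)) (GG n)" by (simp add: WW_def lo_def)
      have "psmult (WW n 0) (psmult (PSS.F GG (?s ` S)) ?X)
          = psmult (psmult (Omega (bb n 1)) (GG 1)) (psmult (psmult (GG n) ?P) ?X)"
        unfolding e1 e4 by (simp only: psmult_assoc psmult_commute psmult_left_commute)
      also have "\<dots> = psmult (psmult (GG n) ?P) ?X" by (rule Om_cancel)
      finally have fin: "psmult (WW n 0) (psmult (PSS.F GG (?s ` S)) ?X) = psmult (psmult (GG n) ?P) ?X" .
      show ?thesis unfolding sop0 base e3 fin by (simp only: e2)
    qed
  qed
qed

lemma main: "Dop n i (psmult (rho n j) f)
           = psmult (rho n j) ((omg_inv n ^^ j) (Dop n k ((omg n ^^ j) f)))"
proof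
  fix m
  have r: "(omg_inv n ^^ j) (Dop n k ((omg n ^^ j) f)) = (\<lambda>m. f m + inverse (1 - ealpha n i) * (TT f m - f m))"
    unfolding omg_pow[OF n0] omg_inv_pow[OF n0] by (rule rhs_inner)
  have "psmult (rho n j) ((omg_inv n ^^ j) (Dop n k ((omg n ^^ j) f))) m
      = psmult (rho n j) (\<lambda>m. f m + inverse (1 - ealpha n i) * (TT f m - f m)) m"
    by (simp only: r)
  also have "\<dots> = psmult (rho n j) f m + inverse (1 - ealpha n i) * (psmult (rho n j) (TT f) m - psmult (rho n j) f m)"
    by (rule psmult_lin)
  also have "\<dots> = Dop n i (psmult (rho n j) f) m"
    by (simp only: Dop_def sop_rho)
  finally show "Dop n i (psmult (rho n j) f) m = psmult (rho n j) ((omg_inv n ^^ j) (Dop n k ((omg n ^^ j) f))) m"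
    by (rule sym)
qed

end

theorem lemma6p1:
  fixes n j i :: nat and f :: "coeff ps"
  assumes "n \<ge> 2" and "1 \<le> j" and "j \<le> n" and "i < n" and "f \<in> Lhat n"
  shows "Dop n i (psmult (rho n j) f)
           = psmult (rho n j) ((omg_inv n ^^ j) (Dop n ((i + j) mod n) ((omg n ^^ j) f)))"
proof -
  interpret setup6 n j i using assms by unfold_locales auto
  show ?thesis by (rule main)
qed


end
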